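(* Fix real numbers $\{\Theta_{kj}\}_{k,j\in[K]}$. For $\mathbf{P}\in[0,1]^K$ and $(\boldsymbol{\alpha},\boldsymbol{\gamma})\in[-\pi,\pi)^{2K}$ let $\beta_{kj}=\cos^2(\alpha_j+\Theta_{kj}-\Theta_{jj}-\gamma_k)$ and $R_{sum}(\mathbf{P},\boldsymbol{\alpha},\boldsymbol{\gamma})=\sum_{k=1}^K\ln\!\left(1+\frac{P_k\beta_{kk}}{\sum_{j\ne k}P_j\beta_{kj}+\frac12}\right)$. Then for any $\mathbf{P}\in[0,1]^K$ and $(\boldsymbol{\alpha},\boldsymbol{\gamma})\in[-\pi,\pi)^{2K}$, $$R_{sum}(\mathbf{P},\boldsymbol{\alpha},\boldsymbol{\gamma})\le 2\max_{\mathcal{S}\subset[K]}R_{sum}(\mathbf{1}_{\mathcal{S}},\boldsymbol{\alpha},\boldsymbol{\gamma}),$$ where $\mathbf{1}_{\mathcal{S}}\in\{0,1\}^K$ has $k$-th component $1$ if $k\in\mathcal{S}$ and $0$ otherwise. *)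

theory Defs
  imports "HOL-Analysis.Analysis"
begin

definition beta :: "(nat \<Rightarrow> nat \<Rightarrow> real) \<Rightarrow> (nat \<Rightarrow> real) \<Rightarrow> (nat \<Rightarrow> real) \<Rightarrow> nat \<Rightarrow> nat \<Rightarrow> real" where
  "beta \<Theta> \<alpha> \<gamma> k j = (cos (\<alpha> j + \<Theta> k j - \<Theta> j j - \<gamma> k))\<^sup>2"

definition Rsum :: "nat \<Rightarrow> (nat \<Rightarrow> nat \<Rightarrow> real) \<Rightarrow> (nat \<Rightarrow> real) \<Rightarrow> (nat \<Rightarrow> real) \<Rightarrow> (nat \<Rightarrow> real) \<Rightarrow> real" where
  "Rsum K \<Theta> P \<alpha> \<gamma> = (\<Sum>k\<in>{1..K}. ln (1 + P k * beta \<Theta> \<alpha> \<gamma> k k /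
      ((\<Sum>j\<in>{1..K} - {k}. P j * beta \<Theta> \<alpha> \<gamma> k j) + 1/2)))"

definition indic_vec :: "nat set \<Rightarrow> nat \<Rightarrow> real" where
  "indic_vec S k = (if k \<in> S then 1 else 0)"

end

theory Submission
  imports Defs
begin

definition DD :: "nat \<Rightarrow> (nat \<Rightarrow> nat \<Rightarrow> real) \<Rightarrow> (nat \<Rightarrow> real) \<Rightarrow> (nat \<Rightarrow> real) \<Rightarrow> (nat \<Rightarrow> real) \<Rightarrow> nat \<Rightarrow> real" where
  "DD K \<Theta> P \<alpha> \<gamma> k = (\<Sum>j\<in>{1..K} - {k}. P j * beta \<Theta> \<alpha> \<gamma> k j) + 1/2"

definition GG :: "nat \<Rightarrow> (nat \<Rightarrow> nat \<Rightarrow> real) \<Rightarrow> (nat \<Rightarrow> real) \<Rightarrow> (nat \<Rightarrow> real) \<Rightarrow> (nat \<Rightarrow> real) \<Rightarrow> real" where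
  "GG K \<Theta> P \<alpha> \<gamma> = (\<Sum>k\<in>{1..K}. P k * ln (1 + beta \<Theta> \<alpha> \<gamma> k k / DD K \<Theta> P \<alpha> \<gamma> k))"

lemma beta_bounds: "0 \<le> beta \<Theta> \<alpha> \<gamma> k j" "beta \<Theta> \<alpha> \<gamma> k j \<le> 1"
  unfolding beta_def by (auto simp: abs_square_le_1)

lemma DD_ge: assumes "\<forall>k\<in>{1..K}. 0 \<le> P k" shows "DD K \<Theta> P \<alpha> \<gamma> k \<ge> 1/2"
proof -
  have "(\<Sum>j\<in>{1..K} - {k}. P j * beta \<Theta> \<alpha> \<gamma> k j) \<ge> 0"
    using assms beta_bounds by (intro sum_nonneg) auto
  thus ?thesis unfolding DD_def by simp
qed

lemma x_le_2ln: assumes "0 \<le> (x::real)" "x \<le> 2" shows "x \<le> 2 * ln (1 + x)"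
proof -
  have "exp ((1 - x/2) *\<^sub>R 0 + (x/2) *\<^sub>R 1) \<le> (1 - x/2) * exp 0 + (x/2) * exp 1"
    using convex_onD[OF exp_convex, of "x/2" 0 1] assms by simp
  also have "\<dots> \<le> 1 + x"
  proof -
    have "x * exp 1 \<le> x * 3" using exp_le assms by (intro mult_left_mono) auto
    thus ?thesis by simp
  qed
  finally have "exp (x/2) \<le> 1 + x" by simp
  hence "ln (exp (x/2)) \<le> ln (1 + x)" using assms by (subst ln_le_cancel_iff) auto
  thus ?thesis by simp
qed

lemma term_bound: assumes "0 \<le> p" "p \<le> 1" "0 \<le> (x::real)" "x \<le> 2"
  shows "ln (1 + p * x) \<le> 2 * (p * ln (1 + x))"
proof -
  have "ln (1 + p * x) \<le> p * x" using assms by (intro ln_add_one_self_le_self) simp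
  also have "\<dots> \<le> p * (2 * ln (1 + x))" using x_le_2ln[OF assms(3,4)] assms
    by (intro mult_left_mono) auto
  finally show ?thesis by simp
qed

lemma phi_convex: assumes "(b::real) \<ge> 0" shows "convex_on {0<..} (\<lambda>x. ln (1 + b / x))"
proof -
  have eq: "\<And>x. x \<in> {0<..} \<Longrightarrow> ln (1 + b / x) = ln (x + b) - ln x"
  proof -
    fix x :: real assume "x \<in> {0<..}"
    hence "1 + b / x = (x + b) / x" by (auto simp: field_simps)
    thus "ln (1 + b / x) = ln (x + b) - ln x" using \<open>x \<in> _\<close> assms by (simp add: ln_div)
  qed
  have "convex_on {0<..} (\<lambda>x. ln (x + b) - ln x)"
  proof (rule convex_on_realI[where f' = "\<lambda>x. 1/(x+b) - 1/x"])
    show "connected {0::real<..}" by simp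
  next
    fix x :: real assume "x \<in> {0<..}"
    thus "((\<lambda>x. ln (x + b) - ln x) has_real_derivative 1/(x+b) - 1/x) (at x)"
      using assms by (auto intro!: derivative_eq_intros)
  next
    fix x y :: real assume "x \<in> {0<..}" "y \<in> {0<..}" "x \<le> y"
    hence "x * (x + b) \<le> y * (y + b)" using assms by (intro mult_mono) auto
    moreover have "1/(x+b) - 1/x = - b / (x * (x+b))" "1/(y+b) - 1/y = - b / (y * (y+b))"
      using \<open>x \<in> _\<close> \<open>y \<in> _\<close> assms by (auto simp: field_simps)
    moreover have "b / (y * (y+b)) \<le> b / (x * (x+b))"
      using calculation(1) \<open>x \<in> _\<close> \<open>y \<in> _\<close> assms by (intro divide_left_mono) (auto intro!: mult_pos_pos)
    ultimately show "1/(x+b) - 1/x \<le> 1/(y+b) - 1/y" by simp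
  qed
  note c = this
  show ?thesis
  proof (rule convex_onI)
    show "convex {0::real<..}" by simp
  next
    fix t x y :: real assume h: "0 < t" "t < 1" "x \<in> {0<..}" "y \<in> {0<..}"
    have m: "(1 - t) *\<^sub>R x + t *\<^sub>R y \<in> {0<..}"
      using h by (simp add: add_nonneg_pos add_pos_nonneg)
    show "ln (1 + b / ((1 - t) *\<^sub>R x + t *\<^sub>R y)) \<le> (1 - t) * ln (1 + b / x) + t * ln (1 + b / y)"
      using convex_onD[OF c, of t x y] h eq[OF m] eq[OF h(3)] eq[OF h(4)] by simp
  qed
qed

lemma DD_split:
  assumes "m \<in> {1..K}" "m \<noteq> k"
  shows "DD K \<Theta> (P(m:=s)) \<alpha> \<gamma> k =
    (\<Sum>j\<in>{1..K} - {k} - {m}. P j * beta \<Theta> \<alpha> \<gamma> k j) + 1/2 + s * beta \<Theta> \<alpha> \<gamma> k m"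
proof -
  have mm: "m \<in> {1..K} - {k}" using assms by auto
  have "(\<Sum>j\<in>{1..K} - {k}. (P(m:=s)) j * beta \<Theta> \<alpha> \<gamma> k j)
     = s * beta \<Theta> \<alpha> \<gamma> k m + (\<Sum>j\<in>{1..K} - {k} - {m}. (P(m:=s)) j * beta \<Theta> \<alpha> \<gamma> k j)"
    by (subst sum.remove[OF _ mm]) auto
  also have "(\<Sum>j\<in>{1..K} - {k} - {m}. (P(m:=s)) j * beta \<Theta> \<alpha> \<gamma> k j)
     = (\<Sum>j\<in>{1..K} - {k} - {m}. P j * beta \<Theta> \<alpha> \<gamma> k j)"
    by (rule sum.cong) auto
  finally show ?thesis unfolding DD_def by simp
qed

lemma GG_coord:
  assumes P: "\<forall>k\<in>{1..K}. 0 \<le> P k \<and> P k \<le> 1" and m: "m \<in> {1..K}"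
  shows "GG K \<Theta> P \<alpha> \<gamma> \<le> (1 - P m) * GG K \<Theta> (P(m:=0)) \<alpha> \<gamma> + P m * GG K \<Theta> (P(m:=1)) \<alpha> \<gamma>"
proof -
  define t where "t = P m"
  have t: "0 \<le> t" "t \<le> 1" using P m unfolding t_def by auto
  have P0: "\<forall>k\<in>{1..K}. 0 \<le> (P(m:=0)) k" and P1: "\<forall>k\<in>{1..K}. 0 \<le> (P(m:=1)) k"
    and Pn: "\<forall>k\<in>{1..K}. 0 \<le> P k" using P by auto
  have "GG K \<Theta> P \<alpha> \<gamma> \<le> (\<Sum>k\<in>{1..K}.
      (1 - t) * ((P(m:=0)) k * ln (1 + beta \<Theta> \<alpha> \<gamma> k k / DD K \<Theta> (P(m:=0)) \<alpha> \<gamma> k))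
      + t * ((P(m:=1)) k * ln (1 + beta \<Theta> \<alpha> \<gamma> k k / DD K \<Theta> (P(m:=1)) \<alpha> \<gamma> k)))"
    unfolding GG_def
  proof (rule sum_mono)
    fix k assume k: "k \<in> {1..K}"
    show "P k * ln (1 + beta \<Theta> \<alpha> \<gamma> k k / DD K \<Theta> P \<alpha> \<gamma> k) \<le>
      (1 - t) * ((P(m:=0)) k * ln (1 + beta \<Theta> \<alpha> \<gamma> k k / DD K \<Theta> (P(m:=0)) \<alpha> \<gamma> k))
      + t * ((P(m:=1)) k * ln (1 + beta \<Theta> \<alpha> \<gamma> k k / DD K \<Theta> (P(m:=1)) \<alpha> \<gamma> k))"
    proof (cases "k = m")
      case True
      have "DD K \<Theta> (P(m:=1)) \<alpha> \<gamma> k = DD K \<Theta> P \<alpha> \<gamma> k"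
        unfolding DD_def using True by (intro arg_cong2[where f="(+)"] sum.cong) auto
      thus ?thesis using True t_def by simp
    next
      case False
      define b where "b = beta \<Theta> \<alpha> \<gamma> k k"
      have b: "b \<ge> 0" using beta_bounds b_def by simp
      have e1: "DD K \<Theta> P \<alpha> \<gamma> k = (\<Sum>j\<in>{1..K} - {k} - {m}. P j * beta \<Theta> \<alpha> \<gamma> k j) + 1/2 + t * beta \<Theta> \<alpha> \<gamma> k m"
        using DD_split[OF m, of k \<Theta> "P" "P m" \<alpha> \<gamma>] False t_def by simp
      have e: "DD K \<Theta> P \<alpha> \<gamma> k = (1 - t) * DD K \<Theta> (P(m:=0)) \<alpha> \<gamma> k + t * DD K \<Theta> (P(m:=1)) \<alpha> \<gamma> k"
        unfolding e1 DD_split[OF m False[symmetric]] by (simp add: field_simps)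
      have "DD K \<Theta> (P(m:=0)) \<alpha> \<gamma> k \<ge> 1/2" by (rule DD_ge[OF P0])
      hence d0: "DD K \<Theta> (P(m:=0)) \<alpha> \<gamma> k \<in> {0<..}" unfolding greaterThan_iff by linarith
      have "DD K \<Theta> (P(m:=1)) \<alpha> \<gamma> k \<ge> 1/2" by (rule DD_ge[OF P1])
      hence d1: "DD K \<Theta> (P(m:=1)) \<alpha> \<gamma> k \<in> {0<..}" unfolding greaterThan_iff by linarith
      have "ln (1 + b / DD K \<Theta> P \<alpha> \<gamma> k) \<le>
         (1 - t) * ln (1 + b / DD K \<Theta> (P(m:=0)) \<alpha> \<gamma> k) + t * ln (1 + b / DD K \<Theta> (P(m:=1)) \<alpha> \<gamma> k)"
        using convex_onD[OF phi_convex[OF b] t d0 d1] e by simp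
      hence "P k * ln (1 + b / DD K \<Theta> P \<alpha> \<gamma> k) \<le> P k *
         ((1 - t) * ln (1 + b / DD K \<Theta> (P(m:=0)) \<alpha> \<gamma> k) + t * ln (1 + b / DD K \<Theta> (P(m:=1)) \<alpha> \<gamma> k))"
        using Pn k by (intro mult_left_mono) auto
      thus ?thesis using False b_def by (simp add: algebra_simps)
    qed
  qed
  also have "\<dots> = (1 - t) * GG K \<Theta> (P(m:=0)) \<alpha> \<gamma> + t * GG K \<Theta> (P(m:=1)) \<alpha> \<gamma>"
    unfolding GG_def by (simp add: sum.distrib sum_distrib_left)
  finally show ?thesis unfolding t_def .
qed


lemma DD_cong: "\<forall>k\<in>{1..K}. P k = Q k \<Longrightarrow> DD K \<Theta> P \<alpha> \<gamma> k = DD K \<Theta> Q \<alpha> \<gamma> k"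
  unfolding DD_def by (intro arg_cong2[where f="(+)"] sum.cong) auto

lemma GG_cong: "\<forall>k\<in>{1..K}. P k = Q k \<Longrightarrow> GG K \<Theta> P \<alpha> \<gamma> = GG K \<Theta> Q \<alpha> \<gamma>"
  unfolding GG_def using DD_cong[of K P Q] by (intro sum.cong) auto

lemma vertex:
  assumes "finite M"
  shows "\<forall>P. (\<forall>k\<in>{1..K}. 0 \<le> P k \<and> P k \<le> 1) \<longrightarrow> (\<forall>k\<in>{1..K}-M. P k = 0 \<or> P k = 1) \<longrightarrow>
     (\<exists>S\<in>Pow {1..K}. GG K \<Theta> P \<alpha> \<gamma> \<le> GG K \<Theta> (indic_vec S) \<alpha> \<gamma>)"
  using assms
proof (induction M rule: finite_induct)
  case empty
  show ?case
  proof (intro allI impI)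
    fix P :: "nat \<Rightarrow> real"
    assume "\<forall>k\<in>{1..K}-{}. P k = 0 \<or> P k = 1"
    hence "\<forall>k\<in>{1..K}. P k = indic_vec {k\<in>{1..K}. P k = 1} k"
      unfolding indic_vec_def by auto
    hence "GG K \<Theta> P \<alpha> \<gamma> = GG K \<Theta> (indic_vec {k\<in>{1..K}. P k = 1}) \<alpha> \<gamma>" by (rule GG_cong)
    thus "\<exists>S\<in>Pow {1..K}. GG K \<Theta> P \<alpha> \<gamma> \<le> GG K \<Theta> (indic_vec S) \<alpha> \<gamma>"
      by (intro bexI[of _ "{k\<in>{1..K}. P k = 1}"]) auto
  qed
next
  case (insert m M)
  show ?case
  proof (intro allI impI)
    fix P :: "nat \<Rightarrow> real"
    assume P: "\<forall>k\<in>{1..K}. 0 \<le> P k \<and> P k \<le> 1" and B: "\<forall>k\<in>{1..K}-insert m M. P k = 0 \<or> P k = 1"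
    show "\<exists>S\<in>Pow {1..K}. GG K \<Theta> P \<alpha> \<gamma> \<le> GG K \<Theta> (indic_vec S) \<alpha> \<gamma>"
    proof (cases "m \<in> {1..K}")
      case False
      hence "\<forall>k\<in>{1..K}-M. P k = 0 \<or> P k = 1" using B by auto
      thus ?thesis using insert.IH P by blast
    next
      case True
      have "\<forall>k\<in>{1..K}. 0 \<le> (P(m:=0)) k \<and> (P(m:=0)) k \<le> 1" "\<forall>k\<in>{1..K}-M. (P(m:=0)) k = 0 \<or> (P(m:=0)) k = 1"
        using P B by auto
      then obtain S0 where S0: "S0 \<in> Pow {1..K}" "GG K \<Theta> (P(m:=0)) \<alpha> \<gamma> \<le> GG K \<Theta> (indic_vec S0) \<alpha> \<gamma>"
        using insert.IH by blast
      have "\<forall>k\<in>{1..K}. 0 \<le> (P(m:=1)) k \<and> (P(m:=1)) k \<le> 1" "\<forall>k\<in>{1..K}-M. (P(m:=1)) k = 0 \<or> (P(m:=1)) k = 1"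
        using P B by auto
      then obtain S1 where S1: "S1 \<in> Pow {1..K}" "GG K \<Theta> (P(m:=1)) \<alpha> \<gamma> \<le> GG K \<Theta> (indic_vec S1) \<alpha> \<gamma>"
        using insert.IH by blast
      define t where "t = P m"
      have t: "0 \<le> t" "t \<le> 1" using P True t_def by auto
      define g0 where "g0 = GG K \<Theta> (indic_vec S0) \<alpha> \<gamma>"
      define g1 where "g1 = GG K \<Theta> (indic_vec S1) \<alpha> \<gamma>"
      have "GG K \<Theta> P \<alpha> \<gamma> \<le> (1 - t) * GG K \<Theta> (P(m:=0)) \<alpha> \<gamma> + t * GG K \<Theta> (P(m:=1)) \<alpha> \<gamma>"
        using GG_coord[OF P True] t_def by simp
      also have "\<dots> \<le> (1 - t) * g0 + t * g1"
        using S0 S1 t unfolding g0_def g1_def by (intro add_mono mult_left_mono) auto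
      also have "\<dots> \<le> (1 - t) * max g0 g1 + t * max g0 g1"
        using t by (intro add_mono mult_left_mono) auto
      also have "\<dots> = max g0 g1" by (simp add: algebra_simps)
      finally show ?thesis using S0 S1 unfolding g0_def g1_def max_def by (auto split: if_splits)
    qed
  qed
qed

lemma GG_indic: "GG K \<Theta> (indic_vec S) \<alpha> \<gamma> = Rsum K \<Theta> (indic_vec S) \<alpha> \<gamma>"
  unfolding GG_def Rsum_def DD_def by (intro sum.cong) (auto simp: indic_vec_def)

lemma Rsum_le:
  assumes P: "\<forall>k\<in>{1..K}. 0 \<le> P k \<and> P k \<le> 1"
  shows "Rsum K \<Theta> P \<alpha> \<gamma> \<le> 2 * GG K \<Theta> P \<alpha> \<gamma>"
  unfolding GG_def sum_distrib_left
  unfolding Rsum_def DD_def[symmetric]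
proof (rule sum_mono)
  fix k assume k: "k \<in> {1..K}"
  have D: "DD K \<Theta> P \<alpha> \<gamma> k \<ge> 1/2" using DD_ge P by auto
  define x where "x = beta \<Theta> \<alpha> \<gamma> k k / DD K \<Theta> P \<alpha> \<gamma> k"
  have x0: "0 \<le> x" unfolding x_def using D beta_bounds by simp
  have "x \<le> 1 / (1/2)" unfolding x_def using D beta_bounds
    by (intro frac_le) auto
  hence x2: "x \<le> 2" by simp
  have "ln (1 + P k * x) \<le> 2 * (P k * ln (1 + x))"
    using term_bound[OF _ _ x0 x2] P k by auto
  thus "ln (1 + P k * beta \<Theta> \<alpha> \<gamma> k k / DD K \<Theta> P \<alpha> \<gamma> k)
      \<le> 2 * (P k * ln (1 + beta \<Theta> \<alpha> \<gamma> k k / DD K \<Theta> P \<alpha> \<gamma> k))"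
    unfolding x_def by simp
qed

theorem lemma2:
  fixes K :: nat and \<Theta> :: "nat \<Rightarrow> nat \<Rightarrow> real" and P \<alpha> \<gamma> :: "nat \<Rightarrow> real"
  assumes "\<forall>k\<in>{1..K}. 0 \<le> P k \<and> P k \<le> 1"
    and "\<forall>k\<in>{1..K}. -pi \<le> \<alpha> k \<and> \<alpha> k < pi"
    and "\<forall>k\<in>{1..K}. -pi \<le> \<gamma> k \<and> \<gamma> k < pi"
  shows "Rsum K \<Theta> P \<alpha> \<gamma> \<le>
    2 * Max ((\<lambda>S. Rsum K \<Theta> (indic_vec S) \<alpha> \<gamma>) ` Pow {1..K})"
proof -
  obtain S where S: "S \<in> Pow {1..K}" "GG K \<Theta> P \<alpha> \<gamma> \<le> GG K \<Theta> (indic_vec S) \<alpha> \<gamma>"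
    using vertex[of "{1..K}" K \<Theta> \<alpha> \<gamma>] assms(1) by auto
  have "Rsum K \<Theta> P \<alpha> \<gamma> \<le> 2 * GG K \<Theta> P \<alpha> \<gamma>" by (rule Rsum_le[OF assms(1)])
  also have "\<dots> \<le> 2 * Rsum K \<Theta> (indic_vec S) \<alpha> \<gamma>" using S GG_indic by simp
  also have "\<dots> \<le> 2 * Max ((\<lambda>S. Rsum K \<Theta> (indic_vec S) \<alpha> \<gamma>) ` Pow {1..K})"
    using S by (intro mult_left_mono Max_ge) auto
  finally show ?thesis .
qed

end
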